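(* Let $P$ be a rooted forest on $[n]$ with natural labeling, and for $1\le i\le n$ define $\hat\partial_i$ on $\mathcal{L}(P)$ by $\pi\hat\partial_i=\pi\partial_{\pi^{-1}_i}$. Then for $\pi\in\mathcal{L}(P)$, $\pi\hat\partial_i$ is the linear extension obtained from $\pi$ by moving the letter $i$ to position $n$ and reordering the letters $j\succeq i$ (which form a chain) among the positions they then occupy so that the result is a linear extension of $P$.
   Context: A rooted forest is a disjoint union of rooted trees, a rooted tree being a connected finite poset in which each element is covered by at most one element. $\mathcal{L}(P)=\{\pi\in S_n : i\prec j \Rightarrow \pi^{-1}_i<\pi^{-1}_j\}$ in one-line notation $\pi=\pi_1\cdots\pi_n$. $\pi\tau_i$ ($1\le i<n$) swaps $\pi_i,\pi_{i+1}$ if they are incomparable and is $\pi$ otherwise; operators act on the right; $\partial_j=\tau_j\tau_{j+1}\cdots\tau_{n-1}$. *)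

theory Defs
  imports Main
begin

text \<open>A poset on the ground set {1..n} is given by a relation le (read: le x y means x is below-or-equal y).
  Permutations are lists in one-line notation; list index k (0-based) is position k+1.\<close>

definition prec :: "(nat \<Rightarrow> nat \<Rightarrow> bool) \<Rightarrow> nat \<Rightarrow> nat \<Rightarrow> bool" where
  "prec le x y \<longleftrightarrow> le x y \<and> x \<noteq> y"

definition poset_on :: "nat \<Rightarrow> (nat \<Rightarrow> nat \<Rightarrow> bool) \<Rightarrow> bool" where
  "poset_on n le \<longleftrightarrow>
     (\<forall>x\<in>{1..n}. le x x) \<and>
     (\<forall>x\<in>{1..n}. \<forall>y\<in>{1..n}. le x y \<and> le y x \<longrightarrow> x = y) \<and>
     (\<forall>x\<in>{1..n}. \<forall>y\<in>{1..n}. \<forall>z\<in>{1..n}. le x y \<and> le y z \<longrightarrow> le x z)"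

definition covered_by :: "nat \<Rightarrow> (nat \<Rightarrow> nat \<Rightarrow> bool) \<Rightarrow> nat \<Rightarrow> nat \<Rightarrow> bool" where
  "covered_by n le x y \<longleftrightarrow> prec le x y \<and> \<not> (\<exists>z\<in>{1..n}. prec le x z \<and> prec le z y)"

text \<open>Rooted forest: a finite poset in which each element is covered by at most one element
  (equivalently, a disjoint union of rooted trees).\<close>
definition rooted_forest :: "nat \<Rightarrow> (nat \<Rightarrow> nat \<Rightarrow> bool) \<Rightarrow> bool" where
  "rooted_forest n le \<longleftrightarrow> poset_on n le \<and>
     (\<forall>x\<in>{1..n}. \<forall>y\<in>{1..n}. \<forall>z\<in>{1..n}.
        covered_by n le x y \<and> covered_by n le x z \<longrightarrow> y = z)"

definition natural_labeling :: "nat \<Rightarrow> (nat \<Rightarrow> nat \<Rightarrow> bool) \<Rightarrow> bool" where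
  "natural_labeling n le \<longleftrightarrow> (\<forall>x\<in>{1..n}. \<forall>y\<in>{1..n}. prec le x y \<longrightarrow> x < y)"

definition pos :: "nat list \<Rightarrow> nat \<Rightarrow> nat" where
  "pos \<pi> x = (LEAST k. k < length \<pi> \<and> \<pi> ! k = x) + 1"

definition letter :: "nat list \<Rightarrow> nat \<Rightarrow> nat" where
  "letter \<pi> k = \<pi> ! (k - 1)"

definition is_perm :: "nat \<Rightarrow> nat list \<Rightarrow> bool" where
  "is_perm n \<pi> \<longleftrightarrow> length \<pi> = n \<and> distinct \<pi> \<and> set \<pi> = {1..n}"

definition lin_ext :: "nat \<Rightarrow> (nat \<Rightarrow> nat \<Rightarrow> bool) \<Rightarrow> nat list set" where
  "lin_ext n le = {\<pi>. is_perm n \<pi> \<and>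
     (\<forall>x\<in>{1..n}. \<forall>y\<in>{1..n}. prec le x y \<longrightarrow> pos \<pi> x < pos \<pi> y)}"

definition incomparable :: "(nat \<Rightarrow> nat \<Rightarrow> bool) \<Rightarrow> nat \<Rightarrow> nat \<Rightarrow> bool" where
  "incomparable le x y \<longleftrightarrow> \<not> le x y \<and> \<not> le y x"

definition tau :: "(nat \<Rightarrow> nat \<Rightarrow> bool) \<Rightarrow> nat list \<Rightarrow> nat \<Rightarrow> nat list" where
  "tau le \<pi> i =
     (if 1 \<le> i \<and> i < length \<pi> \<and> incomparable le (letter \<pi> i) (letter \<pi> (i+1))
      then \<pi>[i - 1 := letter \<pi> (i+1), i := letter \<pi> i]
      else \<pi>)"

text \<open>\<pi>\<partial>_j = \<pi>\<tau>_j\<tau>_{j+1}...\<tau>_{n-1}, operators acting on the right (\<tau>_j applied first)\<close>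
definition dpart :: "(nat \<Rightarrow> nat \<Rightarrow> bool) \<Rightarrow> nat list \<Rightarrow> nat \<Rightarrow> nat list" where
  "dpart le \<pi> j = foldl (tau le) \<pi> [j..<length \<pi>]"

definition dhat :: "(nat \<Rightarrow> nat \<Rightarrow> bool) \<Rightarrow> nat list \<Rightarrow> nat \<Rightarrow> nat list" where
  "dhat le \<pi> i = dpart le \<pi> (pos \<pi> i)"

end

theory Submission
  imports Defs
begin

fun bub :: "(nat \<Rightarrow> nat \<Rightarrow> bool) \<Rightarrow> nat \<Rightarrow> nat list \<Rightarrow> nat list" where
  "bub le c [] = [c]"
| "bub le c (y#ys) = (if incomparable le c y then y # bub le c ys else c # bub le y ys)"

lemma bub_set: "set (bub le c B) = set (c#B)"
  by (induction B arbitrary: c) auto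

lemma bub_len: "length (bub le c B) = Suc (length B)"
  by (induction B arbitrary: c) auto

lemma tau_step:
  "tau le (A @ c # y # ys) (Suc (length A)) =
     A @ (if incomparable le c y then y # c # ys else c # y # ys)"
  by (simp add: tau_def letter_def nth_append list_update_append)

lemma bub_fold:
  "foldl (tau le) (A @ c # B) [Suc (length A)..<length (A @ c # B)] = A @ bub le c B"
proof (induction B arbitrary: A c)
  case Nil
  then show ?case by simp
next
  case (Cons y ys)
  have u: "[Suc (length A)..<length (A @ c # y # ys)] = Suc (length A) # [Suc (Suc (length A))..<length (A @ c # y # ys)]"
    by (rule upt_conv_Cons) simp
  show ?case
  proof (cases "incomparable le c y")
    case True
    have "foldl (tau le) (A @ c # y # ys) [Suc (length A)..<length (A @ c # y # ys)]
        = foldl (tau le) ((A @ [y]) @ c # ys) [Suc (length (A @ [y]))..<length ((A @ [y]) @ c # ys)]"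
      using True by (simp only: u foldl_Cons tau_step) simp
    also have "\<dots> = (A @ [y]) @ bub le c ys" by (rule Cons.IH)
    finally show ?thesis using True by simp
  next
    case False
    have "foldl (tau le) (A @ c # y # ys) [Suc (length A)..<length (A @ c # y # ys)]
        = foldl (tau le) ((A @ [c]) @ y # ys) [Suc (length (A @ [c]))..<length ((A @ [c]) @ y # ys)]"
      using False by (simp only: u foldl_Cons tau_step) simp
    also have "\<dots> = (A @ [c]) @ bub le y ys" by (rule Cons.IH)
    finally show ?thesis using False by simp
  qed
qed

lemma bub_sorted:
  assumes trans: "\<forall>x\<in>S. \<forall>y\<in>S. \<forall>z\<in>S. le x y \<and> le y z \<longrightarrow> le x z"
    and chain: "\<forall>a\<in>S. \<forall>b\<in>S. le i a \<longrightarrow> le i b \<longrightarrow> le a b \<or> le b a"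
    and "i \<in> S" "set (c#B) \<subseteq> S" "le i c" "sorted_wrt (\<lambda>a b. \<not> le b a) (c#B)"
  shows "sorted_wrt (\<lambda>a b. \<not> le b a) (bub le c B) \<and>
         (\<forall>j<Suc (length B). \<not> le i ((B@[c])!j) \<longrightarrow> bub le c B ! j = (B@[c])!j)"
  using assms(3-)
proof (induction B arbitrary: c)
  case Nil
  then show ?case by (auto simp: less_Suc_eq)
next
  case (Cons y ys)
  have ny: "\<not> le y c" and nz: "\<forall>z\<in>set ys. \<not> le z c" and nzy: "\<forall>z\<in>set ys. \<not> le z y"
    and sys: "sorted_wrt (\<lambda>a b. \<not> le b a) ys" using Cons.prems by auto
  show ?case
  proof (cases "incomparable le c y")
    case True
    have IH: "sorted_wrt (\<lambda>a b. \<not> le b a) (bub le c ys) \<and>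
         (\<forall>j<Suc (length ys). \<not> le i ((ys@[c])!j) \<longrightarrow> bub le c ys ! j = (ys@[c])!j)"
    proof (rule Cons.IH)
      show "set (c#ys) \<subseteq> S" using Cons.prems(2) by auto
      show "le i c" using Cons.prems(3) .
      show "sorted_wrt (\<lambda>a b. \<not> le b a) (c#ys)" using nz sys by simp
    qed (rule Cons.prems(1))
    have s: "sorted_wrt (\<lambda>a b. \<not> le b a) (y # bub le c ys)"
      using IH True nzy by (auto simp: bub_set incomparable_def)
    have "\<forall>j<Suc (length (y#ys)). \<not> le i (((y#ys)@[c])!j) \<longrightarrow> (y # bub le c ys) ! j = ((y#ys)@[c])!j"
    proof (intro allI impI)
      fix j assume "j < Suc (length (y#ys))" "\<not> le i (((y#ys)@[c])!j)"
      then show "(y # bub le c ys) ! j = ((y#ys)@[c])!j"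
        using IH by (cases j) auto
    qed
    then show ?thesis using True s by simp
  next
    case False
    have "le c y" using False ny by (simp add: incomparable_def)
    have inS: "c \<in> S" "y \<in> S" using Cons.prems(2) by auto
    have "le i y" using trans Cons.prems(1,3) inS \<open>le c y\<close> by blast
    have IH: "sorted_wrt (\<lambda>a b. \<not> le b a) (bub le y ys) \<and>
         (\<forall>j<Suc (length ys). \<not> le i ((ys@[y])!j) \<longrightarrow> bub le y ys ! j = (ys@[y])!j)"
    proof (rule Cons.IH)
      show "set (y#ys) \<subseteq> S" using Cons.prems(2) by auto
      show "le i y" by fact
      show "sorted_wrt (\<lambda>a b. \<not> le b a) (y#ys)" using nzy sys by simp
    qed (rule Cons.prems(1))
    have s: "sorted_wrt (\<lambda>a b. \<not> le b a) (c # bub le y ys)"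
      using IH ny nz by (auto simp: bub_set)
    have "\<forall>j<Suc (length (y#ys)). \<not> le i (((y#ys)@[c])!j) \<longrightarrow> (c # bub le y ys) ! j = ((y#ys)@[c])!j"
    proof (intro allI impI)
      fix j assume j: "j < Suc (length (y#ys))" "\<not> le i (((y#ys)@[c])!j)"
      show "(c # bub le y ys) ! j = ((y#ys)@[c])!j"
      proof (cases j)
        case 0 then show ?thesis using j \<open>le i y\<close> by simp
      next
        case (Suc j')
        show ?thesis
        proof (cases "j' < length ys")
          case True
          then show ?thesis using j Suc IH by (simp add: nth_append)
        next
          case False
          then have "j' = length ys" using j Suc by simp
          then show ?thesis using j Suc Cons.prems by simp
        qed
      qed
    qed
    then show ?thesis using False s by simp
  qed
qed

lemma pos_nth:
  assumes "distinct xs" "k < length xs"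
  shows "pos xs (xs ! k) = Suc k"
proof -
  have "(LEAST m. m < length xs \<and> xs ! m = xs ! k) = k"
    by (rule Least_equality) (use assms nth_eq_iff_index_eq in \<open>auto simp: not_le\<close>)
  then show ?thesis by (simp add: pos_def)
qed

lemma linext_sorted:
  assumes "\<pi> \<in> lin_ext n le" "\<forall>x\<in>{1..n}. le x x"
  shows "sorted_wrt (\<lambda>a b. \<not> le b a) \<pi>"
proof -
  have p: "is_perm n \<pi>" and L: "\<forall>x\<in>{1..n}. \<forall>y\<in>{1..n}. prec le x y \<longrightarrow> pos \<pi> x < pos \<pi> y"
    using assms by (auto simp: lin_ext_def)
  show ?thesis unfolding sorted_wrt_iff_nth_less
  proof (intro allI impI)
    fix j k assume jk0: "j < k" "k < length \<pi>"
    then have jk: "j < k \<and> k < length \<pi>" by simp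
    have d: "distinct \<pi>" and s: "set \<pi> = {1..n}" using p by (auto simp: is_perm_def)
    have ne: "\<pi>!j \<noteq> \<pi>!k" using d jk by (simp add: nth_eq_iff_index_eq)
    have inn: "\<pi>!j \<in> {1..n}" "\<pi>!k \<in> {1..n}" using s jk by (metis nth_mem less_trans)+
    show "\<not> le (\<pi>!k) (\<pi>!j)"
    proof
      assume "le (\<pi>!k) (\<pi>!j)"
      then have "prec le (\<pi>!k) (\<pi>!j)" using ne by (auto simp: prec_def)
      then have "pos \<pi> (\<pi>!k) < pos \<pi> (\<pi>!j)" using L inn by blast
      then show False using pos_nth[OF d] jk by simp
    qed
  qed
qed

lemma sorted_linext:
  assumes "is_perm n \<rho>" "sorted_wrt (\<lambda>a b. \<not> le b a) \<rho>"
  shows "\<rho> \<in> lin_ext n le"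
proof -
  have d: "distinct \<rho>" and s: "set \<rho> = {1..n}" using assms by (auto simp: is_perm_def)
  have "pos \<rho> x < pos \<rho> y" if xy: "x \<in> {1..n}" "y \<in> {1..n}" "prec le x y" for x y
  proof -
    obtain j where j: "j < length \<rho>" "\<rho>!j = x" using xy s by (metis in_set_conv_nth)
    obtain k where k: "k < length \<rho>" "\<rho>!k = y" using xy s by (metis in_set_conv_nth)
    have "j \<noteq> k" using j k xy by (auto simp: prec_def)
    moreover have "\<not> k < j"
    proof
      assume "k < j"
      then have "\<not> le (\<rho>!j) (\<rho>!k)" using assms(2) j unfolding sorted_wrt_iff_nth_less by blast
      then show False using j k xy by (simp add: prec_def)
    qed
    ultimately have "j < k" by simp
    then show ?thesis using pos_nth[OF d] j k by auto
  qed
  then show ?thesis using assms(1) by (auto simp: lin_ext_def)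
qed

lemma cover_exists:
  assumes nat: "natural_labeling n le"
    and trans: "\<forall>x\<in>{1..n}. \<forall>y\<in>{1..n}. \<forall>z\<in>{1..n}. le x y \<and> le y z \<longrightarrow> le x z"
    and refl: "\<forall>x\<in>{1..n}. le x x"
    and xy: "x \<in> {1..n}" "y \<in> {1..n}" "prec le x y"
  shows "\<exists>z\<in>{1..n}. covered_by n le x z \<and> le z y"
proof -
  let ?P = "\<lambda>z. z \<in> {1..n} \<and> prec le x z \<and> le z y"
  have "?P y" using xy refl by auto
  then have P: "?P (LEAST z. ?P z)" by (rule LeastI)
  define z where "z = (LEAST z. ?P z)"
  have Pz: "?P z" using P z_def by simp
  have "covered_by n le x z"
    unfolding covered_by_def
  proof (intro conjI notI)
    show "prec le x z" using Pz by simp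
  next
    assume "\<exists>w\<in>{1..n}. prec le x w \<and> prec le w z"
    then obtain w where w: "w \<in> {1..n}" "prec le x w" "prec le w z" by blast
    have zS: "z \<in> {1..n}" and lwz: "le w z" and lzy: "le z y" using w Pz by (auto simp: prec_def)
    have "le w y" using trans w(1) zS xy(2) lwz lzy by blast
    then have "?P w" using w by simp
    then have "z \<le> w" unfolding z_def by (rule Least_le)
    moreover have "w < z" using nat w(1,3) zS unfolding natural_labeling_def by blast
    ultimately show False by simp
  qed
  then show ?thesis using Pz by blast
qed

lemma po_refl: "poset_on n le \<Longrightarrow> \<forall>x\<in>{1..n}. le x x"
  unfolding poset_on_def by (rule conjunct1)

lemma po_trans: "poset_on n le \<Longrightarrow> \<forall>x\<in>{1..n}. \<forall>y\<in>{1..n}. \<forall>z\<in>{1..n}. le x y \<and> le y z \<longrightarrow> le x z"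
  unfolding poset_on_def by (elim conjE)

lemma chain_up:
  assumes rf: "rooted_forest n le" and nat: "natural_labeling n le" and ii: "i \<in> {1..n}"
  shows "\<forall>a\<in>{1..n}. \<forall>b\<in>{1..n}. le i a \<longrightarrow> le i b \<longrightarrow> le a b \<or> le b a"
  using ii
proof (induction "n - i" arbitrary: i rule: less_induct)
  case less
  have po: "poset_on n le" using rf unfolding rooted_forest_def by (rule conjunct1)
  have cov: "\<forall>x\<in>{1..n}. \<forall>y\<in>{1..n}. \<forall>z\<in>{1..n}.
        covered_by n le x y \<and> covered_by n le x z \<longrightarrow> y = z"
    using rf unfolding rooted_forest_def by (rule conjunct2)
  have refl: "\<forall>x\<in>{1..n}. le x x"
    and trans: "\<forall>x\<in>{1..n}. \<forall>y\<in>{1..n}. \<forall>z\<in>{1..n}. le x y \<and> le y z \<longrightarrow> le x z"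
    by (rule po_refl[OF po], rule po_trans[OF po])
  show ?case
  proof (intro ballI impI)
    fix a b assume ab: "a \<in> {1..n}" "b \<in> {1..n}" "le i a" "le i b"
    show "le a b \<or> le b a"
    proof (cases "a = i \<or> b = i")
      case True then show ?thesis using ab by auto
    next
      case False
      then have pa: "prec le i a" and pb: "prec le i b" using ab by (auto simp: prec_def)
      obtain z1 where z1: "z1 \<in> {1..n}" "covered_by n le i z1" "le z1 a"
        using cover_exists[OF nat trans refl less.prems ab(1) pa] by blast
      obtain z2 where z2: "z2 \<in> {1..n}" "covered_by n le i z2" "le z2 b"
        using cover_exists[OF nat trans refl less.prems ab(2) pb] by blast
      have "z1 = z2" using cov less.prems z1(1,2) z2(1,2) by blast
      have "prec le i z1" using z1(2) by (simp add: covered_by_def)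
      then have "i < z1" using nat z1(1) less.prems unfolding natural_labeling_def by blast
      then have "n - z1 < n - i" using z1(1) by auto
      then have H: "\<forall>a\<in>{1..n}. \<forall>b\<in>{1..n}. le z1 a \<longrightarrow> le z1 b \<longrightarrow> le a b \<or> le b a"
        using less.hyps z1(1) by blast
      have "le z1 b" using z2(3) \<open>z1 = z2\<close> by simp
      then show ?thesis using H ab(1,2) z1(3) by blast
    qed
  qed
qed

theorem lemma6p5:
  fixes n :: nat and le :: "nat \<Rightarrow> nat \<Rightarrow> bool" and \<pi> :: "nat list" and i :: nat
  assumes "rooted_forest n le" and "natural_labeling n le"
    and "\<pi> \<in> lin_ext n le" and "i \<in> {1..n}"
  shows "let C = {j \<in> {1..n}. le i j};
             \<sigma> = removeAll i \<pi> @ [i];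
             \<rho> = dhat le \<pi> i
         in (\<forall>a\<in>C. \<forall>b\<in>C. le a b \<or> le b a) \<and>
            \<rho> \<in> lin_ext n le \<and>
            (\<forall>k\<in>{1..n}. letter \<sigma> k \<notin> C \<longrightarrow> letter \<rho> k = letter \<sigma> k)"
proof -
  have po: "poset_on n le" using assms(1) unfolding rooted_forest_def by (rule conjunct1)
  have refl: "\<forall>x\<in>{1..n}. le x x"
    and trans: "\<forall>x\<in>{1..n}. \<forall>y\<in>{1..n}. \<forall>z\<in>{1..n}. le x y \<and> le y z \<longrightarrow> le x z"
    by (rule po_refl[OF po], rule po_trans[OF po])
  have chain: "\<forall>a\<in>{1..n}. \<forall>b\<in>{1..n}. le i a \<longrightarrow> le i b \<longrightarrow> le a b \<or> le b a"
    using chain_up[OF assms(1,2) assms(4)] .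
  have perm: "is_perm n \<pi>" using assms(3) by (simp add: lin_ext_def)
  then have d: "distinct \<pi>" and s: "set \<pi> = {1..n}" and len: "length \<pi> = n"
    by (auto simp: is_perm_def)
  obtain A B where AB: "\<pi> = A @ i # B" using s assms(4) by (metis split_list)
  have iA: "i \<notin> set A" and iB: "i \<notin> set B" using d AB by auto
  have posi: "pos \<pi> i = Suc (length A)" using pos_nth[OF d, of "length A"] AB by simp
  have rho: "dhat le \<pi> i = A @ bub le i B"
    unfolding dhat_def dpart_def posi using bub_fold[of le A i B] AB by simp
  have sig: "removeAll i \<pi> @ [i] = A @ B @ [i]" using AB iA iB by simp
  have sp: "sorted_wrt (\<lambda>a b. \<not> le b a) \<pi>" using linext_sorted[OF assms(3) refl] .
  have sB: "sorted_wrt (\<lambda>a b. \<not> le b a) (i#B)" and sA: "sorted_wrt (\<lambda>a b. \<not> le b a) A"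
    and sAB: "\<forall>a\<in>set A. \<forall>b\<in>set (i#B). \<not> le b a"
    using sp AB by (auto simp: sorted_wrt_append)
  have BS: "set (i#B) \<subseteq> {1..n}" using s AB by auto
  have bs: "sorted_wrt (\<lambda>a b. \<not> le b a) (bub le i B) \<and>
         (\<forall>j<Suc (length B). \<not> le i ((B@[i])!j) \<longrightarrow> bub le i B ! j = (B@[i])!j)"
  proof -
    have lii: "le i i" using refl assms(4) by blast
    show ?thesis by (rule bub_sorted[OF trans chain assms(4) BS lii sB])
  qed
  have sr: "sorted_wrt (\<lambda>a b. \<not> le b a) (A @ bub le i B)"
    using bs sA sAB by (auto simp: sorted_wrt_append bub_set)
  have setr: "set (A @ bub le i B) = set \<pi>" using AB by (auto simp: bub_set)
  have lenr: "length (A @ bub le i B) = length \<pi>" using AB by (simp add: bub_len)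
  have "distinct (A @ bub le i B)"
    by (rule card_distinct) (metis setr lenr distinct_card d)
  then have pr: "is_perm n (A @ bub le i B)" using setr lenr s len by (simp add: is_perm_def)
  have L: "A @ bub le i B \<in> lin_ext n le" using sorted_linext[OF pr sr] .
  have lett: "letter (A @ bub le i B) k = letter (A @ B @ [i]) k"
    if k: "k \<in> {1..n}" "\<not> le i (letter (A @ B @ [i]) k)" for k
  proof (cases "k - 1 < length A")
    case True then show ?thesis by (simp add: letter_def nth_append)
  next
    case False
    have "k - 1 - length A < Suc (length B)" using k len AB False by auto
    then show ?thesis using False bs k by (simp add: letter_def nth_append)
  qed
  show ?thesis unfolding Let_def rho sig
  proof (intro conjI ballI impI)
    fix a b assume "a \<in> {j \<in> {1..n}. le i j}" "b \<in> {j \<in> {1..n}. le i j}"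
    then have "a \<in> {1..n}" "le i a" "b \<in> {1..n}" "le i b" by simp_all
    then show "le a b \<or> le b a" using chain by blast
  next
    show "A @ bub le i B \<in> lin_ext n le" by (rule L)
  next
    fix k assume "k \<in> {1..n}" "letter (A @ B @ [i]) k \<notin> {j \<in> {1..n}. le i j}"
    moreover have "letter (A @ B @ [i]) k \<in> {1..n}"
    proof -
      have "k - 1 < length (A @ B @ [i])" using \<open>k \<in> {1..n}\<close> len AB by auto
      then have "letter (A @ B @ [i]) k \<in> set (A @ B @ [i])" unfolding letter_def by (rule nth_mem)
      moreover have "set (A @ B @ [i]) = set \<pi>" using AB by auto
      ultimately show ?thesis using s by blast
    qed
    ultimately show "letter (A @ bub le i B) k = letter (A @ B @ [i]) k" using lett by blast
  qed
qed

end
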